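(* Let $d,n,p\ge1$, $a_1,\dots,a_n\in\mathbb{R}^d$, $\lambda_1,\dots,\lambda_n\ge0$, $\tau=r/s$ with $r\ge s\ge1$ integers, $\gcd(r,s)=1$, and let $\mathbf{K}=\{x\in\mathbb{R}^d:g_1(x)\ge0,\dots,g_m(x)\ge0\}$ be a compact basic closed semialgebraic set satisfying the Archimedean property. For each $i$ let $UB_i\ge \max\{\|x-a_i\|_\tau: x\in\mathbf{K}\}$. Then: (i) If $(x_1,\dots,x_p)\in\mathbf{K}^p$ is feasible for (LOCOMF), there exist $(z,u,v,\zeta,w,t,\theta)$ such that $(x,z,u,v,\zeta,w,t,\theta)$ is feasible for (MFOMP$_\lambda$) and $\sum_{\ell}\lambda_\ell\theta_\ell=\sum_i\lambda_i\tilde f_{(i)}(x)$. (ii) Conversely, if $(x,z,u,v,\zeta,w,t,\theta)$ is feasible for (MFOMP$_\lambda$), then $x=(x_1,\dots,x_p)$ is feasible for (LOCOMF). (iii) $\rho_\lambda=\hat\rho_\lambda$. (iv) If $\mathbf{K}$ satisfies Slater's condition (it has a point where all $g_k$ are strictly positive), then the continuous relaxation of (MFOMP$_\lambda$), obtained by replacing $w_{i\ell}\in\{0,1\}$, $z_{ij}\in\{0,1\}$ with $w_{i\ell},z_{ij}\in[0,1]$, has a feasible point at which all inequality constraints hold strictly (Slater's condition).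
   Context: $\|z\|_\tau=(\sum_{k=1}^d|z_k|^\tau)^{1/\tau}$. For $x=(x_1,\dots,x_p)\in(\mathbb{R}^d)^p$ let $\tilde f_i(x)=\min_{j=1,\dots,p}\|x_j-a_i\|_\tau$, and let $\tilde f_{(1)}(x)\ge\dots\ge\tilde f_{(n)}(x)$ be the nonincreasing rearrangement of $(\tilde f_1(x),\dots,\tilde f_n(x))$. Problem (LOCOMF): $\rho_\lambda=\min\{\sum_{i=1}^n\lambda_i\tilde f_{(i)}(x): x_j\in\mathbf{K},\ j=1,\dots,p\}$. Problem (MFOMP$_\lambda$): $\hat\rho_\lambda=\min\sum_{\ell=1}^n\lambda_\ell\theta_\ell$ over $x_j\in\mathbf{K}$ ($x_j=(x_{j1},\dots,x_{jd})$), nonnegative reals $\theta_\ell,t_i,v_{ijk},\zeta_{ijk},u_{ij}$ and binaries $w_{i\ell},z_{ij}\in\{0,1\}$ ($i,\ell=1,\dots,n$; $j=1,\dots,p$; $k=1,\dots,d$), subject to: $t_i\le\theta_\ell+UB_i(1-w_{i\ell})$ for all $i,\ell$; $\theta_\ell\ge\theta_{\ell+1}$ for $\ell=1,\dots,n-1$; $u_{ij}\le t_i+UB_i(1-z_{ij})$ for all $i,j$; $v_{ijk}-x_{jk}+a_{ik}\ge0$ and $v_{ijk}+x_{jk}-a_{ik}\ge0$ for all $i,j,k$; $v_{ijk}^r\le\zeta_{ijk}^su_{ij}^{r-s}$ for all $i,j,k$; $\sum_{k=1}^d\zeta_{ijk}\le u_{ij}$ for all $i,j$; $\sum_{j=1}^pz_{ij}=1$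 for all $i$; $\sum_{i=1}^nw_{i\ell}=1$ for all $\ell$; $\sum_{\ell=1}^nw_{i\ell}=1$ for all $i$. Convention $0^0=1$ when $r=s$. A set $\mathbf{K}=\{g_k\ge0\}$ satisfies the Archimedean property if for some $M>0$, $M-\sum_i x_i^2=\sigma_0+\sum_k\sigma_kg_k$ with $\sigma_0,\sigma_k$ sums of squares of polynomials. *)

theory Defs
  imports "HOL-Analysis.Analysis"
begin

inductive poly_fun :: "(real^'d \<Rightarrow> real) \<Rightarrow> bool" where
  pf_const: "poly_fun (\<lambda>x. c)"
| pf_coord: "poly_fun (\<lambda>x. x $ i)"
| pf_add: "poly_fun f \<Longrightarrow> poly_fun g \<Longrightarrow> poly_fun (\<lambda>x. f x + g x)"
| pf_mult: "poly_fun f \<Longrightarrow> poly_fun g \<Longrightarrow> poly_fun (\<lambda>x. f x * g x)"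

definition sos_fun :: "(real^'d \<Rightarrow> real) \<Rightarrow> bool" where
  "sos_fun f \<longleftrightarrow> (\<exists>qs. (\<forall>q\<in>set qs. poly_fun q) \<and>
      f = (\<lambda>x. sum_list (map (\<lambda>q. (q x)^2) qs)))"

definition semialg_set :: "nat \<Rightarrow> (nat \<Rightarrow> real^'d \<Rightarrow> real) \<Rightarrow> (real^'d) set" where
  "semialg_set m g = {y. \<forall>k<m. g k y \<ge> 0}"

definition archimedean :: "nat \<Rightarrow> (nat \<Rightarrow> real^'d \<Rightarrow> real) \<Rightarrow> bool" where
  "archimedean m g \<longleftrightarrow> (\<exists>M>0. \<exists>\<sigma>. (\<forall>k\<le>m. sos_fun (\<sigma> k)) \<and>
     (\<forall>x. M - (\<Sum>i\<in>UNIV. (x $ i)^2) = \<sigma> m x + (\<Sum>k<m. \<sigma> k x * g k x)))"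
  \<comment> \<open>\<sigma> m plays the role of \<sigma>_0\<close>

definition tau_norm :: "real \<Rightarrow> real^'d \<Rightarrow> real" where
  "tau_norm \<tau> z = (\<Sum>k\<in>UNIV. \<bar>z $ k\<bar> powr \<tau>) powr (1 / \<tau>)"

text \<open>f~_i(x) = min_j ||x_j - a_i||_tau  (indices 0-based: i<n, j<p)\<close>
definition f_tilde :: "real \<Rightarrow> nat \<Rightarrow> (nat \<Rightarrow> real^'d) \<Rightarrow> (nat \<Rightarrow> real^'d) \<Rightarrow> nat \<Rightarrow> real" where
  "f_tilde \<tau> p a x i = Min {tau_norm \<tau> (x j - a i) | j. j < p}"

text \<open>Nonincreasing rearrangement: entry l (0-based) is the (l+1)-th largest.\<close>
definition sorted_desc :: "nat \<Rightarrow> (nat \<Rightarrow> real) \<Rightarrow> real list" where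
  "sorted_desc n f = rev (sort (map f [0..<n]))"

definition locomf_obj ::
  "real \<Rightarrow> nat \<Rightarrow> nat \<Rightarrow> (nat \<Rightarrow> real) \<Rightarrow> (nat \<Rightarrow> real^'d) \<Rightarrow> (nat \<Rightarrow> real^'d) \<Rightarrow> real" where
  "locomf_obj \<tau> n p lam a x = (\<Sum>i<n. lam i * sorted_desc n (f_tilde \<tau> p a x) ! i)"

definition locomf_feasible :: "nat \<Rightarrow> (real^'d) set \<Rightarrow> (nat \<Rightarrow> real^'d) \<Rightarrow> bool" where
  "locomf_feasible p K x \<longleftrightarrow> (\<forall>j<p. x j \<in> K)"

definition rho :: "real \<Rightarrow> nat \<Rightarrow> nat \<Rightarrow> (nat \<Rightarrow> real) \<Rightarrow> (nat \<Rightarrow> real^'d) \<Rightarrow> (real^'d) set \<Rightarrow> real" where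
  "rho \<tau> n p lam a K = Inf {locomf_obj \<tau> n p lam a x | x. locomf_feasible p K x}"

text \<open>Feasibility for (MFOMP_lambda); W = {0,1} for the MINLP, W = {0..1} for the continuous
 relaxation. Indices 0-based.\<close>
definition mfomp_feasible ::
  "real set \<Rightarrow> nat \<Rightarrow> nat \<Rightarrow> nat \<Rightarrow> nat \<Rightarrow> (nat \<Rightarrow> real^'d) \<Rightarrow> (nat \<Rightarrow> real) \<Rightarrow> (real^'d) set \<Rightarrow>
   (nat \<Rightarrow> real^'d) \<Rightarrow> (nat \<Rightarrow> nat \<Rightarrow> real) \<Rightarrow> (nat \<Rightarrow> nat \<Rightarrow> real) \<Rightarrow>
   (nat \<Rightarrow> nat \<Rightarrow> real^'d) \<Rightarrow> (nat \<Rightarrow> nat \<Rightarrow> real^'d) \<Rightarrow> (nat \<Rightarrow> nat \<Rightarrow> real) \<Rightarrow>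
   (nat \<Rightarrow> real) \<Rightarrow> (nat \<Rightarrow> real) \<Rightarrow> bool" where
  "mfomp_feasible W r s n p a UB K x z u v \<zeta> w t \<theta> \<longleftrightarrow>
     (\<forall>j<p. x j \<in> K) \<and>
     (\<forall>l<n. \<theta> l \<ge> 0) \<and> (\<forall>i<n. t i \<ge> 0) \<and>
     (\<forall>i<n. \<forall>j<p. u i j \<ge> 0 \<and> (\<forall>k. v i j $ k \<ge> 0 \<and> \<zeta> i j $ k \<ge> 0)) \<and>
     (\<forall>i<n. \<forall>l<n. w i l \<in> W) \<and> (\<forall>i<n. \<forall>j<p. z i j \<in> W) \<and>
     (\<forall>i<n. \<forall>l<n. t i \<le> \<theta> l + UB i * (1 - w i l)) \<and>
     (\<forall>l. l + 1 < n \<longrightarrow> \<theta> l \<ge> \<theta> (l + 1)) \<and>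
     (\<forall>i<n. \<forall>j<p. u i j \<le> t i + UB i * (1 - z i j)) \<and>
     (\<forall>i<n. \<forall>j<p. \<forall>k. v i j $ k - x j $ k + a i $ k \<ge> 0 \<and> v i j $ k + x j $ k - a i $ k \<ge> 0) \<and>
     (\<forall>i<n. \<forall>j<p. \<forall>k. (v i j $ k) ^ r \<le> (\<zeta> i j $ k) ^ s * (u i j) ^ (r - s)) \<and>
     (\<forall>i<n. \<forall>j<p. (\<Sum>k\<in>UNIV. \<zeta> i j $ k) \<le> u i j) \<and>
     (\<forall>i<n. (\<Sum>j<p. z i j) = 1) \<and>
     (\<forall>l<n. (\<Sum>i<n. w i l) = 1) \<and>
     (\<forall>i<n. (\<Sum>l<n. w i l) = 1)"

definition rho_hat ::
  "nat \<Rightarrow> nat \<Rightarrow> nat \<Rightarrow> nat \<Rightarrow> (nat \<Rightarrow> real) \<Rightarrow> (nat \<Rightarrow> real^'d) \<Rightarrow> (nat \<Rightarrow> real) \<Rightarrow> (real^'d) set \<Rightarrow> real" where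
  "rho_hat r s n p lam a UB K = Inf {(\<Sum>l<n. lam l * \<theta> l) | x z u v \<zeta> w t \<theta>.
      mfomp_feasible {0,1} r s n p a UB K x z u v \<zeta> w t \<theta>}"

text \<open>Slater point of the continuous relaxation: equalities hold, every inequality
 constraint (including x_j in K, i.e. g_k(x_j) \<ge> 0, and nonnegativity of the variables)
 holds strictly.\<close>
definition mfomp_relax_strict ::
  "nat \<Rightarrow> (nat \<Rightarrow> real^'d \<Rightarrow> real) \<Rightarrow> nat \<Rightarrow> nat \<Rightarrow> nat \<Rightarrow> nat \<Rightarrow> (nat \<Rightarrow> real^'d) \<Rightarrow> (nat \<Rightarrow> real) \<Rightarrow>
   (nat \<Rightarrow> real^'d) \<Rightarrow> (nat \<Rightarrow> nat \<Rightarrow> real) \<Rightarrow> (nat \<Rightarrow> nat \<Rightarrow> real) \<Rightarrow>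
   (nat \<Rightarrow> nat \<Rightarrow> real^'d) \<Rightarrow> (nat \<Rightarrow> nat \<Rightarrow> real^'d) \<Rightarrow> (nat \<Rightarrow> nat \<Rightarrow> real) \<Rightarrow>
   (nat \<Rightarrow> real) \<Rightarrow> (nat \<Rightarrow> real) \<Rightarrow> bool" where
  "mfomp_relax_strict m g r s n p a UB x z u v \<zeta> w t \<theta> \<longleftrightarrow>
     (\<forall>j<p. \<forall>k<m. g k (x j) > 0) \<and>
     (\<forall>l<n. \<theta> l > 0) \<and> (\<forall>i<n. t i > 0) \<and>
     (\<forall>i<n. \<forall>j<p. u i j > 0 \<and> (\<forall>k. v i j $ k > 0 \<and> \<zeta> i j $ k > 0)) \<and>
     (\<forall>i<n. \<forall>l<n. 0 < w i l \<and> w i l \<le> 1) \<and> (\<forall>i<n. \<forall>j<p. 0 < z i j \<and> z i j \<le> 1) \<and>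
     (\<forall>i<n. \<forall>l<n. t i < \<theta> l + UB i * (1 - w i l)) \<and>
     (\<forall>l. l + 1 < n \<longrightarrow> \<theta> l > \<theta> (l + 1)) \<and>
     (\<forall>i<n. \<forall>j<p. u i j < t i + UB i * (1 - z i j)) \<and>
     (\<forall>i<n. \<forall>j<p. \<forall>k. v i j $ k - x j $ k + a i $ k > 0 \<and> v i j $ k + x j $ k - a i $ k > 0) \<and>
     (\<forall>i<n. \<forall>j<p. \<forall>k. (v i j $ k) ^ r < (\<zeta> i j $ k) ^ s * (u i j) ^ (r - s)) \<and>
     (\<forall>i<n. \<forall>j<p. (\<Sum>k\<in>UNIV. \<zeta> i j $ k) < u i j) \<and>
     (\<forall>i<n. (\<Sum>j<p. z i j) = 1) \<and>
     (\<forall>l<n. (\<Sum>i<n. w i l) = 1) \<and>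
     (\<forall>i<n. (\<Sum>l<n. w i l) = 1)"

end

theory Submission
  imports Defs "HOL-Combinatorics.Permutations"
begin


lemma sd_len[simp]: "length (sorted_desc n f) = n"
  by (simp add: sorted_desc_def)

lemma sd_nth_in: "l < n \<Longrightarrow> sorted_desc n f ! l \<in> f ` {..<n}"
proof -
  assume "l < n"
  hence "sorted_desc n f ! l \<in> set (sorted_desc n f)" by (metis nth_mem sd_len)
  thus ?thesis by (auto simp: sorted_desc_def)
qed

lemma sd_mono: "l + 1 < n \<Longrightarrow> sorted_desc n f ! (l+1) \<le> sorted_desc n f ! l"
  unfolding sorted_desc_def
  by (auto simp: rev_nth intro!: sorted_nth_mono)

lemma sd_perm: obtains q where "q permutes {..<n}" "\<And>l. l < n \<Longrightarrow> sorted_desc n f ! l = f (q l)"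
proof -
  have "mset (sorted_desc n f) = mset (map f [0..<n])" by (simp add: sorted_desc_def)
  then obtain q where q: "q permutes {..<length (map f [0..<n])}"
      "permute_list q (map f [0..<n]) = sorted_desc n f"
    by (rule mset_eq_permutation)
  have "\<And>l. l < n \<Longrightarrow> sorted_desc n f ! l = f (q l)"
  proof -
    fix l assume l: "l < n"
    have "q l < n" using permutes_in_image[OF q(1)] l by simp
    thus "sorted_desc n f ! l = f (q l)"
      using permute_list_nth[OF q(1)] l q(2)[symmetric] by simp
  qed
  with q(1) that show ?thesis by simp
qed

lemma sd_count: assumes "l < n"
  shows "l + 1 \<le> card {i. i < n \<and> sorted_desc n f ! l \<le> f i}"
proof -
  define xs where "xs = sort (map f [0..<n])"
  define c where "c = sorted_desc n f ! l"
  have lx: "length xs = n" by (simp add: xs_def)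
  have c: "c = xs ! (n - Suc l)" using assms by (simp add: c_def sorted_desc_def xs_def rev_nth)
  have "{n - Suc l..<n} \<subseteq> {j. j < length xs \<and> c \<le> xs ! j}"
    using assms lx by (auto simp: c xs_def intro!: sorted_nth_mono)
  hence "card {n - Suc l..<n} \<le> card {j. j < length xs \<and> c \<le> xs ! j}"
    by (intro card_mono) auto
  also have "\<dots> = length (filter (\<lambda>y. c \<le> y) xs)" by (simp add: length_filter_conv_card)
  also have "\<dots> = length (filter (\<lambda>y. c \<le> y) (map f [0..<n]))"
    unfolding xs_def by (metis mset_filter mset_sort size_mset)
  also have "\<dots> = card {i. i < n \<and> c \<le> f i}" by (auto simp: length_filter_conv_card intro!: arg_cong[where f=card])
  finally show ?thesis using assms by (simp add: c_def)
qed

lemma sd_lower: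
  assumes "l < n" and S: "S \<subseteq> {..<n}" "card S \<ge> n - l"
  shows "\<exists>i\<in>S. f i \<ge> sorted_desc n f ! l"
proof (rule ccontr)
  assume na: "\<not> ?thesis"
  define T where "T = {i. i < n \<and> sorted_desc n f ! l \<le> f i}"
  have d: "S \<inter> T = {}" using na by (auto simp: T_def)
  have "T \<subseteq> {..<n}" by (auto simp: T_def)
  hence "card (S \<union> T) \<le> n" using S by (metis card_lessThan card_mono finite_lessThan Un_least)
  moreover have "card (S \<union> T) = card S + card T"
    using d S by (intro card_Un_disjoint) (auto simp: T_def intro: finite_subset)
  moreover have "card T \<ge> l + 1" using sd_count[OF assms(1)] by (simp add: T_def)
  ultimately show False using S assms by linarith
qed


lemma powr_pow_nn: "(x::real) \<ge> 0 \<Longrightarrow> s \<ge> 1 \<Longrightarrow> (x powr a) ^ s = x powr (real s * a)"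
  by (cases "x = 0") (auto simp: powr_power)

lemma tau_norm_nonneg: "tau_norm \<tau> z \<ge> 0"
  by (simp add: tau_norm_def)

lemma norm_bound:
  fixes z v \<zeta> :: "real^'d" and r s :: nat and u \<tau> :: real
  assumes tau: "\<tau> = real r / real s" and s: "s \<ge> 1" "r \<ge> s" and u: "u \<ge> 0"
    and v: "\<And>k. \<bar>z $ k\<bar> \<le> v $ k" and zn: "\<And>k. \<zeta> $ k \<ge> 0"
    and pw: "\<And>k. (v $ k) ^ r \<le> (\<zeta> $ k) ^ s * u ^ (r - s)"
    and sm: "(\<Sum>k\<in>UNIV. \<zeta> $ k) \<le> u"
  shows "tau_norm \<tau> z \<le> u"
proof (cases "u = 0")
  case True
  have "\<forall>k\<in>UNIV. \<zeta> $ k = 0"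
    using sum_nonneg_eq_0_iff[of UNIV "\<lambda>k. \<zeta> $ k"] sm zn True
    by (metis (no_types, lifting) antisym finite sum_nonneg)
  hence "\<And>k. (v $ k) ^ r \<le> 0" using pw s by (simp add: power_0_left)
  hence "\<And>k. v $ k \<le> 0" using s
    by (metis linorder_not_le zero_less_power)
  hence "\<And>k. z $ k = 0" using v by (meson abs_ge_zero abs_le_zero_iff order_trans)
  thus ?thesis by (simp add: tau_norm_def True)
next
  case False
  hence up: "u > 0" using u by simp
  have taup: "\<tau> > 0" using tau s by simp
  have ts: "\<tau> * real s = real r" using tau s by simp
  have vnn: "\<And>k. v $ k \<ge> 0" using v by (meson abs_ge_zero order_trans)
  have key: "\<And>k. v $ k powr \<tau> \<le> \<zeta> $ k * u powr (\<tau> - 1)"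
  proof -
    fix k
    have "(v $ k powr \<tau>) ^ s = v $ k powr real r"
      using powr_pow_nn[OF vnn s(1)] ts by (simp add: mult.commute)
    also have "\<dots> = (v $ k) ^ r" using vnn[of k] s by (simp add: powr_realpow')
    also have "\<dots> \<le> (\<zeta> $ k) ^ s * u ^ (r - s)" by (rule pw)
    also have "u ^ (r - s) = u powr real (r - s)" using up by (simp add: powr_realpow)
    also have "real (r - s) = real s * (\<tau> - 1)" using ts s by (simp add: of_nat_diff algebra_simps)
    also have "u powr (real s * (\<tau> - 1)) = (u powr (\<tau> - 1)) ^ s"
      using powr_pow_nn[OF u s(1)] by simp
    also have "(\<zeta> $ k) ^ s * (u powr (\<tau> - 1)) ^ s = (\<zeta> $ k * u powr (\<tau> - 1)) ^ s"
      by (simp add: power_mult_distrib)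
    finally have "(v $ k powr \<tau>) ^ s \<le> (\<zeta> $ k * u powr (\<tau> - 1)) ^ s" .
    moreover have "0 \<le> \<zeta> $ k * u powr (\<tau> - 1)" using zn by simp
    ultimately show "v $ k powr \<tau> \<le> \<zeta> $ k * u powr (\<tau> - 1)"
      using s(1) power_le_imp_le_base[of "v $ k powr \<tau>" "s - 1"] by simp
  qed
  have "(\<Sum>k\<in>UNIV. \<bar>z $ k\<bar> powr \<tau>) \<le> (\<Sum>k\<in>UNIV. \<zeta> $ k * u powr (\<tau> - 1))"
    by (intro sum_mono order_trans[OF powr_mono2 key]) (use taup v in auto)
  also have "\<dots> = (\<Sum>k\<in>UNIV. \<zeta> $ k) * u powr (\<tau> - 1)" by (simp add: sum_distrib_right)
  also have "\<dots> \<le> u * u powr (\<tau> - 1)" by (intro mult_right_mono sm) simp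
  also have "\<dots> = u powr \<tau>" using up by (simp add: powr_diff)
  finally have S: "(\<Sum>k\<in>UNIV. \<bar>z $ k\<bar> powr \<tau>) \<le> u powr \<tau>" .
  have "tau_norm \<tau> z \<le> (u powr \<tau>) powr (1 / \<tau>)"
    unfolding tau_norm_def using taup by (intro powr_mono2 S) (auto intro: sum_nonneg)
  also have "\<dots> = u" using taup up by (simp add: powr_powr)
  finally show ?thesis .
qed

lemma norm_construct:
  fixes z :: "real^'d" and r s :: nat and \<tau> :: real
  assumes tau: "\<tau> = real r / real s" and s: "s \<ge> 1" "r \<ge> s"
  defines "u \<equiv> tau_norm \<tau> z"
  defines "v \<equiv> (\<chi> k. \<bar>z $ k\<bar>) :: real^'d"
  defines "\<zeta> \<equiv> (\<chi> k. if u = 0 then 0 else \<bar>z $ k\<bar> powr \<tau> / u powr (\<tau> - 1)) :: real^'d"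
  shows "(\<forall>k. (v $ k) ^ r \<le> (\<zeta> $ k) ^ s * u ^ (r - s)) \<and> (\<forall>k. \<zeta> $ k \<ge> 0)
     \<and> (\<Sum>k\<in>UNIV. \<zeta> $ k) \<le> u"
proof (cases "u = 0")
  case True
  have taup: "\<tau> > 0" using tau s by simp
  have "(\<Sum>k\<in>UNIV. \<bar>z $ k\<bar> powr \<tau>) = 0" using True by (simp add: u_def tau_norm_def)
  hence "\<forall>k\<in>UNIV. \<bar>z $ k\<bar> powr \<tau> = 0" by (subst (asm) sum_nonneg_eq_0_iff) auto
  hence "\<And>k. z $ k = 0" by simp
  thus ?thesis using True s by (simp add: v_def \<zeta>_def power_0_left)
next
  case False
  have taup: "\<tau> > 0" using tau s by simp
  have ts: "\<tau> * real s = real r" using tau s by simp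
  have up: "u > 0" using False tau_norm_nonneg[of \<tau> z] by (simp add: u_def)
  define S where "S = (\<Sum>k\<in>UNIV. \<bar>z $ k\<bar> powr \<tau>)"
  have Snn: "S \<ge> 0" by (simp add: S_def sum_nonneg)
  have uS: "u powr \<tau> = S" using taup Snn by (simp add: u_def tau_norm_def S_def[symmetric] powr_powr)
  have A: "\<forall>k. (v $ k) ^ r \<le> (\<zeta> $ k) ^ s * u ^ (r - s)"
  proof
    fix k
    have "(\<zeta> $ k) ^ s * u ^ (r - s) = (\<bar>z $ k\<bar> powr \<tau>) ^ s / (u powr (\<tau> - 1)) ^ s * u powr real (r - s)"
      using False up by (simp add: \<zeta>_def power_divide powr_realpow)
    also have "\<dots> = \<bar>z $ k\<bar> powr real r / u powr (real s * (\<tau> - 1)) * u powr real (r - s)"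
      using powr_pow_nn[OF _ s(1)] ts up by (simp add: mult.commute)
    also have "real s * (\<tau> - 1) = real (r - s)" using ts s by (simp add: of_nat_diff algebra_simps)
    also have "\<bar>z $ k\<bar> powr real r / u powr real (r - s) * u powr real (r - s) = \<bar>z $ k\<bar> powr real r"
      using up by simp
    also have "\<dots> = (v $ k) ^ r" using s by (simp add: v_def powr_realpow')
    finally show "(v $ k) ^ r \<le> (\<zeta> $ k) ^ s * u ^ (r - s)" by simp
  qed
  have "(\<Sum>k\<in>UNIV. \<zeta> $ k) = S / u powr (\<tau> - 1)"
    using False by (simp add: \<zeta>_def S_def sum_divide_distrib)
  also have "\<dots> = u powr (\<tau> - (\<tau> - 1))" using up by (simp add: powr_diff uS[symmetric])
  also have "\<dots> = u" using up by simp
  finally show ?thesis using A by (simp add: \<zeta>_def)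
qed


lemma ft_eq: "f_tilde \<tau> p a x i = Min ((\<lambda>j. tau_norm \<tau> (x j - a i)) ` {..<p})"
  unfolding f_tilde_def by (intro arg_cong[where f=Min]) auto

lemma ft_le: "j < p \<Longrightarrow> f_tilde \<tau> p a x i \<le> tau_norm \<tau> (x j - a i)"
  unfolding ft_eq by (intro Min_le) auto

lemma ft_ex: "p \<ge> 1 \<Longrightarrow> \<exists>j<p. f_tilde \<tau> p a x i = tau_norm \<tau> (x j - a i)"
proof -
  assume "p \<ge> 1"
  hence "f_tilde \<tau> p a x i \<in> (\<lambda>j. tau_norm \<tau> (x j - a i)) ` {..<p}"
    unfolding ft_eq by (intro Min_in) (auto simp: lessThan_empty_iff)
  thus ?thesis by auto
qed

lemma ft_nonneg: "p \<ge> 1 \<Longrightarrow> f_tilde \<tau> p a x i \<ge> 0"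
  using ft_ex[of p \<tau> a x i] tau_norm_nonneg by metis

lemma part1:
  fixes a :: "nat \<Rightarrow> real^'d" and x :: "nat \<Rightarrow> real^'d"
  assumes tau: "\<tau> = real r / real s" and s: "s \<ge> 1" "r \<ge> s" and p: "p \<ge> 1"
    and UB: "\<And>i y. i < n \<Longrightarrow> y \<in> K \<Longrightarrow> tau_norm \<tau> (y - a i) \<le> UB i"
    and xK: "\<forall>j<p. x j \<in> K"
  shows "\<exists>z u v \<zeta> w t \<theta>. mfomp_feasible {0,1} r s n p a UB K x z u v \<zeta> w t \<theta> \<and>
            (\<Sum>l<n. lam l * \<theta> l) = locomf_obj \<tau> n p lam a x"
proof -
  define f where "f = f_tilde \<tau> p a x"
  define J where "J i = (SOME j. j < p \<and> f i = tau_norm \<tau> (x j - a i))" for i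
  have J: "J i < p \<and> f i = tau_norm \<tau> (x (J i) - a i)" for i
    unfolding J_def f_def using someI_ex[OF ft_ex[OF p]] by blast
  have fnn: "f i \<ge> 0" for i using ft_nonneg[OF p] by (simp add: f_def)
  have fUB: "i < n \<Longrightarrow> f i \<le> UB i" for i
    using ft_le[of 0 p \<tau> a x i] p UB[of i "x 0"] xK by (simp add: f_def)
  obtain q where q: "q permutes {..<n}" "\<And>l. l < n \<Longrightarrow> sorted_desc n f ! l = f (q l)"
    using sd_perm by blast
  define z where "z i j = (if j = J i then 1 else 0 :: real)" for i j
  define u where "u i j = tau_norm \<tau> (x j - a i)" for i j
  define v where "v i j = ((\<chi> k. \<bar>(x j - a i) $ k\<bar>) :: real^'d)" for i j
  define \<zeta> where "\<zeta> i j = ((\<chi> k. if u i j = 0 then 0 else \<bar>(x j - a i) $ k\<bar> powr \<tau> / u i j powr (\<tau> - 1)) :: real^'d)" for i j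
  define t where "t i = f i" for i
  define \<theta> where "\<theta> l = sorted_desc n f ! l" for l
  define w where "w i l = (if i = q l then 1 else 0 :: real)" for i l
  have NC: "(\<forall>k. (v i j $ k) ^ r \<le> (\<zeta> i j $ k) ^ s * u i j ^ (r - s)) \<and> (\<forall>k. \<zeta> i j $ k \<ge> 0)
     \<and> (\<Sum>k\<in>UNIV. \<zeta> i j $ k) \<le> u i j" for i j
    unfolding \<zeta>_def v_def u_def by (rule norm_construct[OF tau s])
  have th_nn: "l < n \<Longrightarrow> \<theta> l \<ge> 0" for l using q(2) fnn by (simp add: \<theta>_def)
  have qn: "l < n \<Longrightarrow> q l < n" for l using permutes_in_image[OF q(1)] by simp
  have qi: "i < n \<Longrightarrow> inv q i < n" for i
    using permutes_in_image[OF permutes_inv[OF q(1)]] by simp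
  have c1: "\<forall>i<n. \<forall>l<n. t i \<le> \<theta> l + UB i * (1 - w i l)"
  proof (intro allI impI)
    fix i l assume il: "i < n" "l < n"
    show "t i \<le> \<theta> l + UB i * (1 - w i l)"
    proof (cases "i = q l")
      case True thus ?thesis using q(2)[OF il(2)] by (simp add: t_def \<theta>_def w_def)
    next
      case False thus ?thesis using fUB[OF il(1)] th_nn[OF il(2)] by (simp add: t_def w_def)
    qed
  qed
  have c2: "\<forall>l. l + 1 < n \<longrightarrow> \<theta> l \<ge> \<theta> (l + 1)" using sd_mono by (simp add: \<theta>_def)
  have c3: "\<forall>i<n. \<forall>j<p. u i j \<le> t i + UB i * (1 - z i j)"
  proof (intro allI impI)
    fix i j assume ij: "i < n" "j < p"
    show "u i j \<le> t i + UB i * (1 - z i j)"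
    proof (cases "j = J i")
      case True thus ?thesis using J[of i] by (simp add: u_def t_def z_def)
    next
      case False thus ?thesis using UB[OF ij(1), of "x j"] xK ij fnn[of i] by (simp add: u_def t_def z_def)
    qed
  qed
  have c4: "\<forall>i<n. (\<Sum>j<p. z i j) = 1" using J by (simp add: z_def)
  have c5: "\<forall>l<n. (\<Sum>i<n. w i l) = 1" using qn by (simp add: w_def)
  have c6: "\<forall>i<n. (\<Sum>l<n. w i l) = 1"
  proof (intro allI impI)
    fix i assume i: "i < n"
    have "(\<Sum>l<n. w i l) = (\<Sum>l<n. if l = inv q i then 1 else 0)"
    proof (intro sum.cong refl)
      fix l have "i = q l \<longleftrightarrow> l = inv q i" using permutes_inv_eq[OF q(1), of i l] by auto
      thus "w i l = (if l = inv q i then 1 else 0)" by (simp add: w_def)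
    qed
    thus "(\<Sum>l<n. w i l) = 1" using qi[OF i] by simp
  qed
  have c0: "\<forall>i<n. \<forall>j<p. u i j \<ge> 0 \<and> (\<forall>k. v i j $ k \<ge> 0 \<and> \<zeta> i j $ k \<ge> 0)"
    using NC by (simp add: u_def v_def tau_norm_nonneg)
  have c7: "\<forall>i<n. \<forall>j<p. \<forall>k. v i j $ k - x j $ k + a i $ k \<ge> 0 \<and> v i j $ k + x j $ k - a i $ k \<ge> 0"
    by (simp add: v_def abs_if)
  have c8: "\<forall>i<n. \<forall>l<n. w i l \<in> {0,1}" "\<forall>i<n. \<forall>j<p. z i j \<in> {0,1}"
    by (simp_all add: w_def z_def)
  have c9: "\<forall>i<n. \<forall>j<p. \<forall>k. (v i j $ k) ^ r \<le> (\<zeta> i j $ k) ^ s * (u i j) ^ (r - s)"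
    "\<forall>i<n. \<forall>j<p. (\<Sum>k\<in>UNIV. \<zeta> i j $ k) \<le> u i j" using NC by blast+
  have c10: "\<forall>l<n. \<theta> l \<ge> 0" "\<forall>i<n. t i \<ge> 0" using th_nn fnn by (simp_all add: t_def)
  have "mfomp_feasible {0,1} r s n p a UB K x z u v \<zeta> w t \<theta>"
    unfolding mfomp_feasible_def
    by (intro conjI) (fact xK c0 c1 c2 c3 c4 c5 c6 c7 c8 c9 c10)+
  moreover have "(\<Sum>l<n. lam l * \<theta> l) = locomf_obj \<tau> n p lam a x"
    by (simp add: locomf_obj_def \<theta>_def f_def)
  ultimately show ?thesis by blast
qed

lemma chain_mono:
  fixes \<theta> :: "nat \<Rightarrow> real"
  assumes "\<forall>l. l + 1 < n \<longrightarrow> \<theta> l \<ge> \<theta> (l + 1)" "l \<le> l'" "l' < n"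
  shows "\<theta> l' \<le> \<theta> l"
  using assms(2,3)
proof (induction l' rule: dec_induct)
  case base thus ?case by simp
next
  case (step m) thus ?case using assms(1)[rule_format, of m] by simp
qed

lemma one_of_01:
  assumes "finite A" "\<forall>x\<in>A. f x \<in> {0,1::real}" "(\<Sum>x\<in>A. f x) = 1"
  shows "\<exists>x\<in>A. f x = 1"
proof (rule ccontr)
  assume "\<not> ?thesis"
  hence "\<forall>x\<in>A. f x = 0" using assms(2) by auto
  thus False using assms(3) by simp
qed

lemma part3_ineq:
  fixes a :: "nat \<Rightarrow> real^'d" and x :: "nat \<Rightarrow> real^'d"
  assumes tau: "\<tau> = real r / real s" and s: "s \<ge> 1" "r \<ge> s" and p: "p \<ge> 1"
    and lam: "\<And>i. i < n \<Longrightarrow> lam i \<ge> 0"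
    and F: "mfomp_feasible {0,1} r s n p a UB K x z u v \<zeta> w t \<theta>"
  shows "locomf_obj \<tau> n p lam a x \<le> (\<Sum>l<n. lam l * \<theta> l)"
proof -
  define f where "f = f_tilde \<tau> p a x"
  note Fc = F[unfolded mfomp_feasible_def]
  have F1: "\<forall>i<n. \<forall>j<p. u i j \<ge> 0 \<and> (\<forall>k. v i j $ k \<ge> 0 \<and> \<zeta> i j $ k \<ge> 0)" using Fc by (elim conjE) assumption
  have F2: "\<forall>i<n. \<forall>l<n. w i l \<in> {0,1}" using Fc by (elim conjE) assumption
  have F3: "\<forall>i<n. \<forall>j<p. z i j \<in> {0,1}" using Fc by (elim conjE) assumption
  have F4: "\<forall>i<n. \<forall>l<n. t i \<le> \<theta> l + UB i * (1 - w i l)" using Fc by (elim conjE) assumption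
  have F5: "\<forall>l. l + 1 < n \<longrightarrow> \<theta> l \<ge> \<theta> (l + 1)" using Fc by (elim conjE) assumption
  have F6: "\<forall>i<n. \<forall>j<p. u i j \<le> t i + UB i * (1 - z i j)" using Fc by (elim conjE) assumption
  have F7: "\<forall>i<n. \<forall>j<p. \<forall>k. v i j $ k - x j $ k + a i $ k \<ge> 0 \<and> v i j $ k + x j $ k - a i $ k \<ge> 0" using Fc by (elim conjE) assumption
  have F8: "\<forall>i<n. \<forall>j<p. \<forall>k. (v i j $ k) ^ r \<le> (\<zeta> i j $ k) ^ s * (u i j) ^ (r - s)" using Fc by (elim conjE) assumption
  have F9: "\<forall>i<n. \<forall>j<p. (\<Sum>k\<in>UNIV. \<zeta> i j $ k) \<le> u i j" using Fc by (elim conjE) assumption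
  have F10: "\<forall>i<n. (\<Sum>j<p. z i j) = 1" using Fc by (elim conjE) assumption
  have F11: "\<forall>l<n. (\<Sum>i<n. w i l) = 1" using Fc by (elim conjE) assumption
  have F12: "\<forall>i<n. (\<Sum>l<n. w i l) = 1" using Fc by (elim conjE) assumption
  have tf: "f i \<le> t i" if i: "i < n" for i
  proof -
    obtain j where j: "j < p" "z i j = 1" using one_of_01[of "{..<p}" "z i"] F3 F10 i by auto
    have "u i j \<le> t i" using F6 i j by force
    moreover have "tau_norm \<tau> (x j - a i) \<le> u i j"
    proof (rule norm_bound[OF tau s])
      show "0 \<le> u i j" using F1 i j by blast
      show "\<bar>(x j - a i) $ k\<bar> \<le> v i j $ k" for k using F7[rule_format, OF i j(1), of k] by (auto simp: abs_le_iff)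
      show "0 \<le> \<zeta> i j $ k" for k using F1 i j by blast
      show "(v i j $ k) ^ r \<le> (\<zeta> i j $ k) ^ s * u i j ^ (r - s)" for k using F8 i j by blast
      show "(\<Sum>k\<in>UNIV. \<zeta> i j $ k) \<le> u i j" using F9 i j by blast
    qed
    ultimately show ?thesis using ft_le[OF j(1), of \<tau> a x i] by (simp add: f_def)
  qed
  define \<sigma> where "\<sigma> l = (SOME i. i < n \<and> w i l = 1)" for l
  have \<sigma>: "\<sigma> l < n \<and> w (\<sigma> l) l = 1" if l: "l < n" for l
  proof -
    have "\<exists>i. i < n \<and> w i l = 1" using one_of_01[of "{..<n}" "\<lambda>i. w i l"] F2 F11 l by auto
    thus ?thesis unfolding \<sigma>_def by (rule someI_ex)
  qed
  have inj: "inj_on \<sigma> {..<n}"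
  proof (rule inj_onI)
    fix l1 l2 assume l: "l1 \<in> {..<n}" "l2 \<in> {..<n}" "\<sigma> l1 = \<sigma> l2"
    show "l1 = l2"
    proof (rule ccontr)
      assume ne: "l1 \<noteq> l2"
      define i where "i = \<sigma> l1"
      have i: "i < n" "w i l1 = 1" "w i l2 = 1" using \<sigma>[of l1] \<sigma>[of l2] l unfolding i_def by auto
      have nn: "\<forall>l\<in>{..<n}. 0 \<le> w i l" using F2 i(1) by (metis insert_iff lessThan_iff order_refl singletonD zero_le_one)
      have "(\<Sum>l\<in>{l1,l2}. w i l) \<le> (\<Sum>l<n. w i l)"
        using l nn by (intro sum_mono2) auto
      moreover have "(\<Sum>l\<in>{l1,l2}. w i l) = 2" using ne i by simp
      moreover have "(\<Sum>l<n. w i l) = 1" using F12 i(1) by blast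
      ultimately show False by simp
    qed
  qed
  have key: "sorted_desc n f ! l \<le> \<theta> l" if l: "l < n" for l
  proof -
    have "inj_on \<sigma> {l..<n}" using inj by (rule inj_on_subset) auto
    hence "card (\<sigma> ` {l..<n}) = n - l" by (simp add: card_image)
    moreover have "\<sigma> ` {l..<n} \<subseteq> {..<n}" using \<sigma> by auto
    ultimately obtain i where i: "i \<in> \<sigma> ` {l..<n}" "f i \<ge> sorted_desc n f ! l"
      using sd_lower[OF l, of "\<sigma> ` {l..<n}" f] by auto
    then obtain l' where l': "l \<le> l'" "l' < n" "i = \<sigma> l'" by auto
    have "t i \<le> \<theta> l'" using F4 \<sigma>[OF l'(2)] l' by force
    moreover have "\<theta> l' \<le> \<theta> l" using chain_mono[of n \<theta> l l'] F5 l' by blast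
    ultimately show ?thesis using tf[of i] \<sigma>[OF l'(2)] l' i by force
  qed
  show ?thesis unfolding locomf_obj_def f_def[symmetric]
    using key lam by (intro sum_mono mult_left_mono) auto
qed


lemma part4:
  fixes a :: "nat \<Rightarrow> real^'d" and y :: "real^'d" and g :: "nat \<Rightarrow> real^'d \<Rightarrow> real"
  assumes n: "n \<ge> 1" and p: "p \<ge> 1" and s: "s \<ge> 1" "r \<ge> s"
    and gy: "\<forall>k<m. g k y > 0" and K: "K = semialg_set m g"
    and UB: "\<And>i y. i < n \<Longrightarrow> y \<in> K \<Longrightarrow> tau_norm \<tau> (y - a i) \<le> UB i"
  shows "\<exists>x z u v \<zeta> w t \<theta>. mfomp_feasible {0..1} r s n p a UB K x z u v \<zeta> w t \<theta> \<and>
              mfomp_relax_strict m g r s n p a UB x z u v \<zeta> w t \<theta>"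
proof -
  have yK: "y \<in> K" using gy by (auto simp: K semialg_set_def less_imp_le)
  have UBnn: "i < n \<Longrightarrow> UB i \<ge> 0" for i using UB[OF _ yK] tau_norm_nonneg order_trans by metis
  define D where "D = real CARD('d)"
  have Dp: "D > 0" by (simp add: D_def)
  define x where "x j = y" for j :: nat
  define vv where "vv i = ((\<chi> k. \<bar>y $ k - a i $ k\<bar> + 1) :: real^'d)" for i
  define M where "M i = (\<Sum>k\<in>UNIV. vv i $ k)" for i
  define U where "U i = 2 * D * M i + 1" for i
  define u where "u i j = U i" for i j :: nat
  define v where "v i j = vv i" for i j :: nat
  define \<zeta> where "\<zeta> i j = ((\<chi> k. U i / (2 * D)) :: real^'d)" for i j :: nat
  define t where "t i = U i + 1" for i
  define T where "T = (\<Sum>i<n. t i)"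
  define \<theta> where "\<theta> l = T + real n - real l" for l
  define w where "w i l = 1 / real n" for i l :: nat
  define z where "z i j = 1 / real p" for i j :: nat
  have vvp: "vv i $ k > 0" for i k by (simp add: vv_def)
  have vvM: "vv i $ k \<le> M i" for i k unfolding M_def
    by (rule member_le_sum) (auto intro: less_imp_le vvp)
  have Mp: "M i > 0" for i using vvM[of i] vvp[of i] by (meson less_le_trans)
  have Up: "U i > 0" for i unfolding U_def using Mp[of i] Dp by (intro add_pos_pos mult_pos_pos) auto
  have tp: "t i > 0" for i using Up[of i] by (simp add: t_def)
  have tT: "i < n \<Longrightarrow> t i \<le> T" for i unfolding T_def
    by (rule member_le_sum) (auto intro: less_imp_le tp)
  have Tp: "T > 0" using tT[of 0] tp[of 0] n by simp
  have vvZ: "vv i $ k < U i / (2 * D)" for i k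
  proof -
    have "U i / (2 * D) = M i + 1 / (2 * D)" using Dp by (simp add: U_def field_simps)
    moreover have "1 / (2 * D) > 0" using Dp by simp
    ultimately show ?thesis using vvM[of i k] by linarith
  qed
  have vvU: "vv i $ k < U i" for i k
  proof -
    have c: "0 < CARD('d)" by simp
    hence D1: "D \<ge> 1" unfolding D_def by (metis of_nat_1 of_nat_le_iff Suc_leI One_nat_def)
    have "U i / (2 * D) \<le> U i / 2" using Up[of i] D1 by (intro divide_left_mono) auto
    also have "\<dots> \<le> U i" using Up[of i] by simp
    finally have "U i / (2 * D) \<le> U i" .
    thus ?thesis using vvZ[of i k] by simp
  qed
  have pw: "(vv i $ k) ^ r < (U i / (2 * D)) ^ s * (U i) ^ (r - s)" for i k
  proof -
    have rr: "r = s + (r - s)" using s by simp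
    have "(vv i $ k) ^ r = (vv i $ k) ^ s * (vv i $ k) ^ (r - s)" by (subst rr) (simp add: power_add)
    also have "\<dots> \<le> (vv i $ k) ^ s * (U i) ^ (r - s)"
      using vvp[of i k] vvU[of i k] by (intro mult_left_mono power_mono) auto
    also have "\<dots> < (U i / (2 * D)) ^ s * (U i) ^ (r - s)"
      using vvp[of i k] vvZ[of i k] Up[of i] s
      by (intro mult_strict_right_mono power_strict_mono) auto
    finally show ?thesis .
  qed
  have zsum: "(\<Sum>k\<in>UNIV. \<zeta> i j $ k) < u i j" for i j
  proof -
    have "(\<Sum>k\<in>UNIV. \<zeta> i j $ k) = D * (U i / (2 * D))" by (simp add: \<zeta>_def D_def)
    also have "\<dots> = U i / 2" using Dp by simp
    finally show ?thesis using Up[of i] by (simp add: u_def)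
  qed
  have thl: "l < n \<Longrightarrow> \<theta> l \<ge> T + 1" for l by (simp add: \<theta>_def)
  have S1: "\<forall>i<n. \<forall>l<n. t i < \<theta> l + UB i * (1 - w i l)"
  proof (intro allI impI)
    fix i l assume il: "i < n" "l < n"
    have "UB i * (1 - w i l) \<ge> 0" using UBnn[OF il(1)] n
      by (intro mult_nonneg_nonneg) (auto simp: w_def)
    thus "t i < \<theta> l + UB i * (1 - w i l)" using tT[OF il(1)] thl[OF il(2)] by simp
  qed
  have S2: "\<forall>i<n. \<forall>j<p. u i j < t i + UB i * (1 - z i j)"
  proof (intro allI impI)
    fix i j assume ij: "i < n" "j < p"
    have "UB i * (1 - z i j) \<ge> 0" using UBnn[OF ij(1)] p
      by (intro mult_nonneg_nonneg) (auto simp: z_def)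
    thus "u i j < t i + UB i * (1 - z i j)" by (simp add: u_def t_def)
  qed
  have S3: "\<forall>i<n. \<forall>j<p. \<forall>k. v i j $ k - x j $ k + a i $ k > 0 \<and> v i j $ k + x j $ k - a i $ k > 0"
    by (simp add: v_def vv_def x_def abs_if)
  have S4: "\<forall>i<n. (\<Sum>j<p. z i j) = 1" using p by (simp add: z_def)
  have S5: "\<forall>l<n. (\<Sum>i<n. w i l) = 1" "\<forall>i<n. (\<Sum>l<n. w i l) = 1" using n by (simp_all add: w_def)
  have S6: "\<forall>i<n. \<forall>l<n. 0 < w i l \<and> w i l \<le> 1" "\<forall>i<n. \<forall>j<p. 0 < z i j \<and> z i j \<le> 1"
    using n p by (simp_all add: w_def z_def)
  have S7: "\<forall>l<n. \<theta> l > 0" "\<forall>i<n. t i > 0" using thl Tp tp by (auto intro: less_le_trans[of 0 "T+1"])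
  have S8: "\<forall>i<n. \<forall>j<p. u i j > 0 \<and> (\<forall>k. v i j $ k > 0 \<and> \<zeta> i j $ k > 0)"
    using Up vvp Dp by (simp add: u_def v_def \<zeta>_def)
  have S9: "\<forall>l. l + 1 < n \<longrightarrow> \<theta> l > \<theta> (l + 1)" by (simp add: \<theta>_def)
  have S10: "\<forall>i<n. \<forall>j<p. \<forall>k. (v i j $ k) ^ r < (\<zeta> i j $ k) ^ s * (u i j) ^ (r - s)"
    using pw by (simp add: v_def \<zeta>_def u_def)
  have S11: "\<forall>i<n. \<forall>j<p. (\<Sum>k\<in>UNIV. \<zeta> i j $ k) < u i j" using zsum by simp
  have S0: "\<forall>j<p. \<forall>k<m. g k (x j) > 0" using gy by (simp add: x_def)
  have strict: "mfomp_relax_strict m g r s n p a UB x z u v \<zeta> w t \<theta>"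
    unfolding mfomp_relax_strict_def
    by (intro conjI) (fact S0 S1 S2 S3 S4 S5 S6 S7 S8 S9 S10 S11)+
  have W0: "\<forall>j<p. x j \<in> K" using yK by (simp add: x_def)
  have W1: "\<forall>l<n. \<theta> l \<ge> 0" "\<forall>i<n. t i \<ge> 0" using S7 by (simp_all add: less_imp_le)
  have W2: "\<forall>i<n. \<forall>j<p. u i j \<ge> 0 \<and> (\<forall>k. v i j $ k \<ge> 0 \<and> \<zeta> i j $ k \<ge> 0)"
    using S8 by (simp add: less_imp_le)
  have W3: "\<forall>i<n. \<forall>l<n. w i l \<in> {0..1}" "\<forall>i<n. \<forall>j<p. z i j \<in> {0..1}" using S6 by (simp_all add: less_imp_le)
  have W4: "\<forall>i<n. \<forall>l<n. t i \<le> \<theta> l + UB i * (1 - w i l)" using S1 by (simp add: less_imp_le)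
  have W5: "\<forall>l. l + 1 < n \<longrightarrow> \<theta> l \<ge> \<theta> (l + 1)" using S9 by (simp add: less_imp_le)
  have W6: "\<forall>i<n. \<forall>j<p. u i j \<le> t i + UB i * (1 - z i j)" using S2 by (simp add: less_imp_le)
  have W7: "\<forall>i<n. \<forall>j<p. \<forall>k. v i j $ k - x j $ k + a i $ k \<ge> 0 \<and> v i j $ k + x j $ k - a i $ k \<ge> 0"
    using S3 by (simp add: less_imp_le)
  have W8: "\<forall>i<n. \<forall>j<p. \<forall>k. (v i j $ k) ^ r \<le> (\<zeta> i j $ k) ^ s * (u i j) ^ (r - s)"
    using S10 by (simp add: less_imp_le)
  have W9: "\<forall>i<n. \<forall>j<p. (\<Sum>k\<in>UNIV. \<zeta> i j $ k) \<le> u i j" using S11 by (simp add: less_imp_le)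
  have feas: "mfomp_feasible {0..1} r s n p a UB K x z u v \<zeta> w t \<theta>"
    unfolding mfomp_feasible_def
    by (intro conjI) (fact W0 W1 W2 W3 W4 W5 W6 W7 W8 W9 S4 S5)+
  show ?thesis by (intro exI conjI, rule feas, rule strict)
qed

theorem theorem4p1:
  fixes n p m r s :: nat
    and a :: "nat \<Rightarrow> real^'d"
    and lam :: "nat \<Rightarrow> real"
    and g :: "nat \<Rightarrow> real^'d \<Rightarrow> real"
    and UB :: "nat \<Rightarrow> real"
  defines "\<tau> \<equiv> real r / real s"
    and "K \<equiv> semialg_set m g"
  assumes "n \<ge> 1" and "p \<ge> 1"
    and "\<And>i. i < n \<Longrightarrow> lam i \<ge> 0"
    and "s \<ge> 1" and "r \<ge> s" and "coprime r s"
    and "\<And>k. k < m \<Longrightarrow> poly_fun (g k)"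
    and "compact K"
    and "archimedean m g"
    and "\<And>i y. i < n \<Longrightarrow> y \<in> K \<Longrightarrow> tau_norm \<tau> (y - a i) \<le> UB i"
  shows
    "(\<forall>x. locomf_feasible p K x \<longrightarrow>
        (\<exists>z u v \<zeta> w t \<theta>. mfomp_feasible {0,1} r s n p a UB K x z u v \<zeta> w t \<theta> \<and>
            (\<Sum>l<n. lam l * \<theta> l) = locomf_obj \<tau> n p lam a x))
     \<and> (\<forall>x z u v \<zeta> w t \<theta>. mfomp_feasible {0,1} r s n p a UB K x z u v \<zeta> w t \<theta> \<longrightarrow>
          locomf_feasible p K x)
     \<and> rho \<tau> n p lam a K = rho_hat r s n p lam a UB K
     \<and> ((\<exists>y. \<forall>k<m. g k y > 0) \<longrightarrow>
          (\<exists>x z u v \<zeta> w t \<theta>. mfomp_feasible {0..1} r s n p a UB K x z u v \<zeta> w t \<theta> \<and>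
              mfomp_relax_strict m g r s n p a UB x z u v \<zeta> w t \<theta>))"
proof -
  note tau = \<tau>_def[THEN meta_eq_to_obj_eq]
  have P1: "\<forall>x. locomf_feasible p K x \<longrightarrow>
        (\<exists>z u v \<zeta> w t \<theta>. mfomp_feasible {0,1} r s n p a UB K x z u v \<zeta> w t \<theta> \<and>
            (\<Sum>l<n. lam l * \<theta> l) = locomf_obj \<tau> n p lam a x)"
  proof (intro allI impI)
    fix x assume xK: "locomf_feasible p K x"
    show "\<exists>z u v \<zeta> w t \<theta>. mfomp_feasible {0,1} r s n p a UB K x z u v \<zeta> w t \<theta> \<and>
            (\<Sum>l<n. lam l * \<theta> l) = locomf_obj \<tau> n p lam a x"
      apply (rule part1[where n=n and K=K and UB=UB and a=a, OF tau assms(6,7) assms(4)])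
       apply (rule assms(12); assumption)
      using xK unfolding locomf_feasible_def by simp
  qed
  have P2: "\<forall>x z u v \<zeta> w t \<theta>. mfomp_feasible {0,1} r s n p a UB K x z u v \<zeta> w t \<theta> \<longrightarrow>
          locomf_feasible p K x"
  proof (intro allI impI)
    fix x z u v \<zeta> w t \<theta> assume "mfomp_feasible {0,1} r s n p a UB K x z u v \<zeta> w t \<theta>"
    thus "locomf_feasible p K x" unfolding mfomp_feasible_def locomf_feasible_def by (elim conjE) assumption
  qed
  define A where "A = {locomf_obj \<tau> n p lam a x | x. locomf_feasible p K x}"
  define B where "B = {(\<Sum>l<n. lam l * \<theta> l) | x z u v \<zeta> w t \<theta>.
      mfomp_feasible {0,1} r s n p a UB K x z u v \<zeta> w t \<theta>}"
  have AB: "A \<subseteq> B"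
  proof
    fix b assume "b \<in> A"
    then obtain x where x: "locomf_feasible p K x" "b = locomf_obj \<tau> n p lam a x" unfolding A_def by blast
    then obtain z u v \<zeta> w t \<theta> where "mfomp_feasible {0,1} r s n p a UB K x z u v \<zeta> w t \<theta>"
        "(\<Sum>l<n. lam l * \<theta> l) = locomf_obj \<tau> n p lam a x" using P1 by blast
    hence "b = (\<Sum>l<n. lam l * \<theta> l) \<and> mfomp_feasible {0,1} r s n p a UB K x z u v \<zeta> w t \<theta>"
      using x(2) by simp
    thus "b \<in> B" unfolding B_def mem_Collect_eq
      by blast
  qed
  have BA: "\<forall>b\<in>B. \<exists>a'\<in>A. a' \<le> b"
  proof
    fix b assume "b \<in> B"
    then obtain x z u v \<zeta> w t \<theta> where F: "mfomp_feasible {0,1} r s n p a UB K x z u v \<zeta> w t \<theta>"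
      and b: "b = (\<Sum>l<n. lam l * \<theta> l)" unfolding B_def mem_Collect_eq by (elim exE conjE) simp
    have "locomf_obj \<tau> n p lam a x \<le> b"
      using part3_ineq[OF tau assms(6,7) assms(4) assms(5) F] b by simp
    moreover have "locomf_feasible p K x" using P2 F by blast
    hence "locomf_obj \<tau> n p lam a x \<in> A" unfolding A_def by blast
    ultimately show "\<exists>a'\<in>A. a' \<le> b" by blast
  qed
  have Bbdd: "bdd_below B"
  proof (rule bdd_belowI)
    fix b assume "b \<in> B"
    then obtain x z u v \<zeta> w t \<theta> where F: "mfomp_feasible {0,1} r s n p a UB K x z u v \<zeta> w t \<theta>"
      and b: "b = (\<Sum>l<n. lam l * \<theta> l)" unfolding B_def mem_Collect_eq by (elim exE conjE) simp
    have "\<forall>l<n. \<theta> l \<ge> 0" using F unfolding mfomp_feasible_def by (elim conjE) assumption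
    thus "0 \<le> b" unfolding b using assms(5) by (intro sum_nonneg mult_nonneg_nonneg) auto
  qed
  have Abdd: "bdd_below A" using Bbdd AB by (rule bdd_below_mono)
  have P3: "Inf A = Inf B"
  proof (cases "A = {}")
    case True
    hence "B = {}" using BA by auto
    thus ?thesis using True by simp
  next
    case False
    hence Bne: "B \<noteq> {}" using AB by auto
    have "Inf B \<le> Inf A" using cInf_superset_mono[OF False Bbdd AB] .
    moreover have "Inf A \<le> Inf B"
    proof (rule cInf_greatest[OF Bne])
      fix b assume "b \<in> B"
      then obtain a' where "a' \<in> A" "a' \<le> b" using BA by blast
      thus "Inf A \<le> b" using cInf_lower[OF _ Abdd] by (meson order_trans)
    qed
    ultimately show ?thesis by simp
  qed
  have P3': "rho \<tau> n p lam a K = rho_hat r s n p lam a UB K"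
    using P3 unfolding rho_def rho_hat_def A_def B_def .
  have P4: "(\<exists>y. \<forall>k<m. g k y > 0) \<longrightarrow>
          (\<exists>x z u v \<zeta> w t \<theta>. mfomp_feasible {0..1} r s n p a UB K x z u v \<zeta> w t \<theta> \<and>
              mfomp_relax_strict m g r s n p a UB x z u v \<zeta> w t \<theta>)"
  proof
    assume "\<exists>y. \<forall>k<m. g k y > 0"
    then obtain y where y: "\<forall>k<m. g k y > 0" by blast
    show "\<exists>x z u v \<zeta> w t \<theta>. mfomp_feasible {0..1} r s n p a UB K x z u v \<zeta> w t \<theta> \<and>
              mfomp_relax_strict m g r s n p a UB x z u v \<zeta> w t \<theta>"
      by (rule part4[OF assms(3,4,6,7) y K_def[THEN meta_eq_to_obj_eq] assms(12)])
  qed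
  show ?thesis by (intro conjI) (fact P1 P2 P3' P4)+
qed

end
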